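(* Let $C$ be an $E$-linear code of length $2n$. Then: (1) if $C$ is free, $LSHull(C^{\perp_{S_L}})=LSHull(C)$; (2) if $C_{Res}\cap (C_{Tor})^{\perp_S}=\{0\}$ and $C_{Tor}=\mathbb{F}_2^{2n}$, then $RSHull(C^{\perp_{S_R}})=RSHull(C)$; (3) $SHull(C^{\perp_S})=SHull(C)$.
   Context: $E=\langle \kappa,\tau \mid 2\kappa=2\tau=0,\ \kappa^2=\kappa,\ \tau^2=\tau,\ \kappa\tau=\kappa,\ \tau\kappa=\tau\rangle$ is the non-unital ring $\{0,\kappa,\tau,\zeta\}$, $\zeta=\kappa+\tau$, with $e\kappa=e\tau=e$, $e\zeta=0$ for all $e\in E$. Every $e\in E$ is uniquely $u\kappa+v\zeta$ ($u,v\in\mathbb{F}_2$); $\pi(u\kappa+v\zeta)=u$, componentwise. An $E$-linear code of length $2n$ is a left $E$-submodule $C\subseteq E^{2n}$; $C_{Res}=\pi(C)$, $C_{Tor}=\{v\in\mathbb{F}_2^{2n}:\zeta v\in C\}$ (componentwise, $0\cdot\zeta=0,1\cdot\zeta=\zeta$); $C$ is free if $C_{Res}=C_{Tor}$. Symplectic inner product (over $E$ or $\mathbb{F}_2$): $\langle (u|v),(u'|v')\rangle_s=\sum_i u_iv'_i+\sum_i v_iu'_i$; for binary $B$, $B^{\perp_S}=\{z:\langle z,w\rangle_s=0\ \forall w\in B\}$. For $E$-linear $C$: $C^{\perp_{S_L}}=\{z\in E^{2n}:\langle z,w\rangle_s=0\ \forall w\in C\}$, $C^{\perp_{S_R}}=\{z\in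 E^{2n}:\langle w,z\rangle_s=0\ \forall w\in C\}$, $C^{\perp_S}=C^{\perp_{S_L}}\cap C^{\perp_{S_R}}$, $LSHull(C)=C\cap C^{\perp_{S_L}}$, $RSHull(C)=C\cap C^{\perp_{S_R}}$, $SHull(C)=C\cap C^{\perp_S}$. *)

theory Defs
  imports Main "HOL-Library.Z2"
begin

text \<open>The non-unital ring E = {0, kappa, tau, zeta}, zeta = kappa + tau.\<close>
datatype EE = E0 | Kap | Tau | Zet

instantiation EE :: "{zero, plus, times}"
begin
definition zero_EE :: EE where "zero_EE = E0"
fun plus_EE :: "EE \<Rightarrow> EE \<Rightarrow> EE" where
  "plus_EE E0 y = y"
| "plus_EE x E0 = x"
| "plus_EE Kap Kap = E0" | "plus_EE Kap Tau = Zet" | "plus_EE Kap Zet = Tau"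
| "plus_EE Tau Kap = Zet" | "plus_EE Tau Tau = E0" | "plus_EE Tau Zet = Kap"
| "plus_EE Zet Kap = Tau" | "plus_EE Zet Tau = Kap" | "plus_EE Zet Zet = E0"
fun times_EE :: "EE \<Rightarrow> EE \<Rightarrow> EE" where
  "times_EE e Kap = e"
| "times_EE e Tau = e"
| "times_EE e Zet = E0"
| "times_EE e E0 = E0"
instance ..
end

instance EE :: comm_monoid_add
proof
  fix a b c :: EE
  show "a + b + c = a + (b + c)" by (cases a; cases b; cases c) (simp_all add: zero_EE_def)
  show "a + b = b + a" by (cases a; cases b) (simp_all add: zero_EE_def)
  show "0 + a = a" by (cases a) (simp_all add: zero_EE_def)
qed

text \<open>pi(u kappa + v zeta) = u. kappa = 1 kappa + 0 zeta, tau = 1 kappa + 1 zeta.\<close>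
fun piE :: "EE \<Rightarrow> bit" where
  "piE E0 = 0" | "piE Kap = 1" | "piE Tau = 1" | "piE Zet = 0"

text \<open>Scalar action of zeta on a binary entry: 0 zeta = 0, 1 zeta = zeta.\<close>
definition zeta_mult :: "bit \<Rightarrow> EE" where
  "zeta_mult b = (if b = 1 then Zet else E0)"

definition vecs :: "nat \<Rightarrow> 'a list set" where
  "vecs n = {x. length x = 2 * n}"

definition symp :: "nat \<Rightarrow> ('a::{comm_monoid_add,times}) list \<Rightarrow> 'a list \<Rightarrow> 'a" where
  "symp n x y = (\<Sum>i<n. x ! i * y ! (n + i)) + (\<Sum>i<n. x ! (n + i) * y ! i)"

definition E_linear :: "nat \<Rightarrow> EE list set \<Rightarrow> bool" where
  "E_linear n C \<longleftrightarrow> C \<subseteq> vecs n \<and> replicate (2 * n) 0 \<in> C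
     \<and> (\<forall>x\<in>C. \<forall>y\<in>C. map2 (+) x y \<in> C)
     \<and> (\<forall>e. \<forall>x\<in>C. map (\<lambda>c. e * c) x \<in> C)"

definition C_Res :: "EE list set \<Rightarrow> bit list set" where
  "C_Res C = map piE ` C"

definition C_Tor :: "nat \<Rightarrow> EE list set \<Rightarrow> bit list set" where
  "C_Tor n C = {v \<in> vecs n. map zeta_mult v \<in> C}"

definition free_code :: "nat \<Rightarrow> EE list set \<Rightarrow> bool" where
  "free_code n C \<longleftrightarrow> C_Res C = C_Tor n C"

definition bin_perpS :: "nat \<Rightarrow> bit list set \<Rightarrow> bit list set" where
  "bin_perpS n B = {z \<in> vecs n. \<forall>w\<in>B. symp n z w = 0}"

definition perpSL :: "nat \<Rightarrow> EE list set \<Rightarrow> EE list set" where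
  "perpSL n C = {z \<in> vecs n. \<forall>w\<in>C. symp n z w = 0}"

definition perpSR :: "nat \<Rightarrow> EE list set \<Rightarrow> EE list set" where
  "perpSR n C = {z \<in> vecs n. \<forall>w\<in>C. symp n w z = 0}"

definition perpS :: "nat \<Rightarrow> EE list set \<Rightarrow> EE list set" where
  "perpS n C = perpSL n C \<inter> perpSR n C"

definition LSHull :: "nat \<Rightarrow> EE list set \<Rightarrow> EE list set" where
  "LSHull n C = C \<inter> perpSL n C"

definition RSHull :: "nat \<Rightarrow> EE list set \<Rightarrow> EE list set" where
  "RSHull n C = C \<inter> perpSR n C"

definition SHull :: "nat \<Rightarrow> EE list set \<Rightarrow> EE list set" where
  "SHull n C = C \<inter> perpS n C"

end

theory Submission imports Defs begin

declare add_bit_eq_xor[simp del] mult_bit_eq_and[simp del]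

lemma bit_cases2: "(b::bit) = 0 \<or> b = 1" by auto
lemma bit_add_self[simp]: "(b::bit) + b = 0" using bit_cases2[of b] by auto
lemma bit_sum0: "(a::bit) + b = 0 \<Longrightarrow> a = b" using bit_cases2[of a] bit_cases2[of b] by auto

definition dot :: "bit list \<Rightarrow> bit list \<Rightarrow> bit" where
  "dot c v = (\<Sum>i<length v. c ! i * v ! i)"

lemma dot_Cons: "dot (a # c) (b # v) = a * b + dot c v"
  unfolding dot_def by (simp only: length_Cons sum.lessThan_Suc_shift nth_Cons_0 nth_Cons_Suc)

lemma dot_Nil: "dot c [] = 0" unfolding dot_def by simp

lemma dot_add: "length u = length v \<Longrightarrow> dot c (map2 (+) u v) = dot c u + dot c v"
  unfolding dot_def by (simp add: distrib_left sum.distrib)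

lemma dot_zero: "dot (replicate m 0) v = 0 \<or> length v > m"
  unfolding dot_def by (auto intro!: sum.neutral)

lemma dot_zero': "length v = m \<Longrightarrow> dot (replicate m 0) v = 0"
  unfolding dot_def by (auto intro!: sum.neutral)

lemma map2_cancel: "length u = length w \<Longrightarrow> map2 (+) (map2 (+) u w) w = (u::bit list)"
  by (rule nth_equalityI) (auto simp: add.assoc)

lemma sep:
  "\<forall>A x. A \<subseteq> {v. length v = m} \<longrightarrow> replicate m 0 \<in> A \<longrightarrow>
     (\<forall>u\<in>A. \<forall>v\<in>A. map2 (+) u v \<in> A) \<longrightarrow> length x = m \<longrightarrow> x \<notin> A \<longrightarrow>
     (\<exists>c. length c = m \<and> (\<forall>v\<in>A. dot c v = 0) \<and> dot c x = 1)"
proof (induction m)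
  case 0
  then show ?case by auto
next
  case (Suc m)
  show ?case
  proof (intro allI impI)
    fix A x
    assume As: "A \<subseteq> {v. length v = Suc m}" and A0: "replicate (Suc m) 0 \<in> A"
      and Acl: "\<forall>u\<in>A. \<forall>v\<in>A. map2 (+) u v \<in> A" and lx: "length (x::bit list) = Suc m"
      and xA: "x \<notin> A"
    define A' where "A' = {v'. (0::bit) # v' \<in> A}"
    have A's: "A' \<subseteq> {v. length v = m}" using As unfolding A'_def by auto
    have A'0: "replicate m 0 \<in> A'" using A0 unfolding A'_def by simp
    have A'cl: "\<forall>u\<in>A'. \<forall>v\<in>A'. map2 (+) u v \<in> A'"
    proof (intro ballI)
      fix u v assume "u \<in> A'" "v \<in> A'"
      then have "map2 (+) (0 # u) (0 # v) \<in> A" using Acl unfolding A'_def by blast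
      then show "map2 (+) u v \<in> A'" unfolding A'_def by simp
    qed
    obtain b x' where xe: "x = b # x'" using lx by (cases x) auto
    have lx': "length x' = m" using lx xe by simp
    have formA: "\<And>v. v \<in> A \<Longrightarrow> \<exists>a v'. v = a # v' \<and> length v' = m"
      using As by (auto simp: length_Suc_conv)
    show "\<exists>c. length c = Suc m \<and> (\<forall>v\<in>A. dot c v = 0) \<and> dot c x = 1"
    proof (cases "\<exists>w'. (1::bit) # w' \<in> A")
      case True
      then obtain w' where wA: "(1::bit) # w' \<in> A" by blast
      have lw': "length w' = m" using As wA by auto
      define x'' where "x'' = (if b = 0 then x' else map2 (+) x' w')"
      have lx'': "length x'' = m" using lx' lw' unfolding x''_def by auto
      have x''A: "x'' \<notin> A'"
      proof
        assume "x'' \<in> A'"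
        then have h: "0 # x'' \<in> A" unfolding A'_def by simp
        show False
        proof (cases "b = 0")
          case True
          then show False using h xA xe unfolding x''_def by simp
        next
          case False
          then have b1: "b = 1" using bit_cases2 by blast
          have "map2 (+) (0 # x'') (1 # w') \<in> A" using Acl h wA by blast
          moreover have "map2 (+) (0 # x'') (1 # w') = x"
            using b1 xe map2_cancel[of x' w'] lx' lw' unfolding x''_def by simp
          ultimately show False using xA by simp
        qed
      qed
      obtain c' where c': "length c' = m" "\<forall>v\<in>A'. dot c' v = 0" "dot c' x'' = 1"
        using Suc.IH[rule_format, OF A's A'0 _ lx'' x''A] A'cl by blast
      define c where "c = dot c' w' # c'"
      have "\<forall>v\<in>A. dot c v = 0"
      proof
        fix v assume vA: "v \<in> A"
        then obtain a v' where ve: "v = a # v'" and lv': "length v' = m" using formA by blast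
        show "dot c v = 0"
        proof (cases "a = 0")
          case True
          then have "v' \<in> A'" using vA ve unfolding A'_def by simp
          then show ?thesis using c' True ve unfolding c_def by (simp add: dot_Cons)
        next
          case False
          then have a1: "a = 1" using bit_cases2 by blast
          have "map2 (+) v (1 # w') \<in> A" using Acl vA wA by blast
          then have "map2 (+) v' w' \<in> A'" using a1 ve unfolding A'_def by simp
          then have "dot c' (map2 (+) v' w') = 0" using c' by blast
          then have "dot c' v' + dot c' w' = 0" using dot_add[of v' w' c'] lv' lw' by simp
          then have "dot c' v' = dot c' w'"
            by (rule bit_sum0)
          then show ?thesis using a1 ve unfolding c_def by (simp add: dot_Cons)
        qed
      qed
      moreover have "dot c x = 1"
      proof (cases "b = 0")
        case True
        then show ?thesis using c' xe unfolding c_def x''_def by (simp add: dot_Cons)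
      next
        case False
        then have b1: "b = 1" using bit_cases2 by blast
        have "dot c' (map2 (+) x' w') = 1" using c' b1 unfolding x''_def by simp
        then have "dot c' x' + dot c' w' = 1" using dot_add[of x' w' c'] lx' lw' by simp
        then show ?thesis using b1 xe unfolding c_def by (simp add: dot_Cons add.commute)
      qed
      moreover have "length c = Suc m" using c' unfolding c_def by simp
      ultimately show ?thesis by blast
    next
      case False
      have hd0: "\<exists>v'. v = 0 # v' \<and> v' \<in> A' \<and> length v' = m" if vA: "v \<in> A" for v
      proof -
        obtain a v' where ve: "v = a # v'" and "length v' = m" using formA vA by blast
        moreover have "a \<noteq> 1" using False vA ve by blast
        ultimately show ?thesis using bit_cases2[of a] vA unfolding A'_def by auto
      qed
      show ?thesis
      proof (cases "b = 0")
        case False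
        then have b1: "b = 1" using bit_cases2 by blast
        define c where "c = 1 # replicate m (0::bit)"
        have "\<forall>v\<in>A. dot c v = 0"
        proof
          fix v assume "v \<in> A"
          then obtain v' where "v = 0 # v'" "length v' = m" using hd0 by blast
          then show "dot c v = 0" unfolding c_def by (simp add: dot_Cons dot_zero')
        qed
        moreover have "dot c x = 1" using b1 xe lx' unfolding c_def by (simp add: dot_Cons dot_zero')
        ultimately show ?thesis unfolding c_def by (intro exI[of _ "1 # replicate m (0::bit)"]) simp
      next
        case True
        then have "x' \<notin> A'" using xA xe unfolding A'_def by simp
        then obtain c' where c': "length c' = m" "\<forall>v\<in>A'. dot c' v = 0" "dot c' x' = 1"
          using Suc.IH[rule_format, OF A's A'0 _ lx' \<open>x' \<notin> A'\<close>] A'cl by blast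
        define c where "c = 0 # c'"
        have "\<forall>v\<in>A. dot c v = 0"
        proof
          fix v assume "v \<in> A"
          then obtain v' where "v = 0 # v'" "v' \<in> A'" using hd0 by blast
          then show "dot c v = 0" using c' unfolding c_def by (simp add: dot_Cons)
        qed
        moreover have "dot c x = 1" using True xe c' unfolding c_def by (simp add: dot_Cons)
        ultimately show ?thesis using c' unfolding c_def by (intro exI[of _ "0 # c'"]) simp
      qed
    qed
  qed
qed


lemma sum_split_nat: "(\<Sum>i<n+k. f i) = (\<Sum>i<n. f i) + (\<Sum>i<k. f (n+i))"
  for f :: "nat \<Rightarrow> 'a::comm_monoid_add"
  by (induction k) (simp_all add: add.assoc)

lemma symp_dot:
  assumes "length z = 2*n" "length (w::bit list) = 2*n"
  shows "symp n z w = dot (drop n z @ take n z) w"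
proof -
  have "dot (drop n z @ take n z) w = (\<Sum>i<n+n. (drop n z @ take n z) ! i * w ! i)"
    unfolding dot_def using assms by (simp add: mult_2)
  also have "\<dots> = (\<Sum>i<n. (drop n z @ take n z) ! i * w ! i) + (\<Sum>i<n. (drop n z @ take n z) ! (n+i) * w ! (n+i))"
    by (rule sum_split_nat)
  also have "(\<Sum>i<n. (drop n z @ take n z) ! i * w ! i) = (\<Sum>i<n. z ! (n+i) * w ! i)"
    using assms by (intro sum.cong) (auto simp: nth_append)
  also have "(\<Sum>i<n. (drop n z @ take n z) ! (n+i) * w ! (n+i)) = (\<Sum>i<n. z ! i * w ! (n+i))"
    using assms by (intro sum.cong) (auto simp: nth_append)
  finally show ?thesis unfolding symp_def by (simp add: add.commute)
qed

lemma symp_comm_bit: "symp n (x::bit list) y = symp n y x"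
  unfolding symp_def by (simp add: mult.commute add.commute)

definition bsub :: "nat \<Rightarrow> bit list set \<Rightarrow> bool" where
  "bsub n A \<longleftrightarrow> A \<subseteq> vecs n \<and> replicate (2*n) 0 \<in> A \<and> (\<forall>u\<in>A. \<forall>v\<in>A. map2 (+) u v \<in> A)"

lemma perp_vecs: "bin_perpS n A \<subseteq> vecs n"
  unfolding bin_perpS_def by auto

lemma perp_anti: "A \<subseteq> B \<Longrightarrow> bin_perpS n B \<subseteq> bin_perpS n A"
  unfolding bin_perpS_def by auto

lemma perp_un: "bin_perpS n (A \<union> B) = bin_perpS n A \<inter> bin_perpS n B"
  unfolding bin_perpS_def by auto

lemma symp_zero_left: "symp n (replicate (2*n) (0::bit)) w = 0"
  unfolding symp_def by (auto intro!: sum.neutral)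

lemma perp_0: "replicate (2*n) 0 \<in> bin_perpS n A"
  unfolding bin_perpS_def vecs_def using symp_zero_left by auto

lemma perp_inc: "A \<subseteq> vecs n \<Longrightarrow> A \<subseteq> bin_perpS n (bin_perpS n A)"
proof
  fix x assume A: "A \<subseteq> vecs n" and x: "x \<in> A"
  have "\<forall>w\<in>bin_perpS n A. symp n x w = 0"
  proof
    fix w assume "w \<in> bin_perpS n A"
    then have "symp n w x = 0" using x unfolding bin_perpS_def by blast
    then show "symp n x w = 0" by (simp add: symp_comm_bit)
  qed
  then show "x \<in> bin_perpS n (bin_perpS n A)" using A x unfolding bin_perpS_def by blast
qed

lemma perp_perp: assumes "bsub n A" shows "bin_perpS n (bin_perpS n A) = A"
proof
  show "A \<subseteq> bin_perpS n (bin_perpS n A)" using assms perp_inc unfolding bsub_def by blast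
  show "bin_perpS n (bin_perpS n A) \<subseteq> A"
  proof
    fix x assume xpp: "x \<in> bin_perpS n (bin_perpS n A)"
    show "x \<in> A"
    proof (rule ccontr)
      assume xA: "x \<notin> A"
      have lx: "length x = 2*n" using xpp perp_vecs unfolding vecs_def by blast
      have As: "A \<subseteq> {v. length v = 2*n}" using assms unfolding bsub_def vecs_def by auto
      obtain c where c: "length c = 2*n" "\<forall>v\<in>A. dot c v = 0" "dot c x = 1"
        using sep[rule_format, OF As _ _ lx xA] assms unfolding bsub_def by blast
      define y where "y = drop n c @ take n c"
      have ly: "length y = 2*n" using c unfolding y_def by simp
      have yy: "drop n y @ take n y = c" using c unfolding y_def by simp
      have "y \<in> bin_perpS n A"
        unfolding bin_perpS_def vecs_def
      proof (intro CollectI conjI ballI)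
        show "length y = 2*n" by (rule ly)
        fix w assume "w \<in> A"
        then have "length w = 2*n" using As by auto
        then show "symp n y w = 0" using symp_dot[OF ly, of w] yy c \<open>w \<in> A\<close> by simp
      qed
      then have "symp n x y = 0" using xpp unfolding bin_perpS_def by blast
      then have "symp n y x = 0" using symp_comm_bit by metis
      moreover have "symp n y x = 1" using symp_dot[OF ly lx] yy c by simp
      ultimately show False by simp
    qed
  qed
qed


fun nuE :: "EE \<Rightarrow> bit" where
  "nuE E0 = 0" | "nuE Kap = 0" | "nuE Tau = 1" | "nuE Zet = 1"

definition mkE :: "bit \<Rightarrow> bit \<Rightarrow> EE" where
  "mkE a b = (if a = 0 then (if b = 0 then E0 else Zet) else (if b = 0 then Kap else Tau))"

lemma one_one_bit: "(1::bit) + 1 = 0" by simp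

lemma piE_add: "piE (a + b) = piE a + piE b"
  by (cases a; cases b) (simp_all add: zero_EE_def)
lemma nuE_add: "nuE (a + b) = nuE a + nuE b"
  by (cases a; cases b) (simp_all add: zero_EE_def)
lemma piE_0[simp]: "piE 0 = 0" by (simp add: zero_EE_def)
lemma nuE_0[simp]: "nuE 0 = 0" by (simp add: zero_EE_def)
lemma piE_mult: "piE (a * b) = piE a * piE b"
  by (cases a; cases b) simp_all
lemma nuE_mult: "nuE (a * b) = nuE a * piE b"
  by (cases a; cases b) simp_all
lemma EE_zero_iff: "(e = 0) = (piE e = 0 \<and> nuE e = 0)"
  by (cases e) (simp_all add: zero_EE_def)
lemma piE_sum: "piE (sum f A) = (\<Sum>x\<in>A. piE (f x))"
  by (induction A rule: infinite_finite_induct) (simp_all add: piE_add)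
lemma nuE_sum: "nuE (sum f A) = (\<Sum>x\<in>A. nuE (f x))"
  by (induction A rule: infinite_finite_induct) (simp_all add: nuE_add)

lemma symp_pi:
  assumes "length x = 2*n" "length y = 2*n"
  shows "piE (symp n x y) = symp n (map piE x) (map piE y)"
  unfolding symp_def piE_add piE_sum piE_mult
  using assms by (intro arg_cong2[where f="(+)"] sum.cong) auto

lemma symp_nu:
  assumes "length x = 2*n" "length y = 2*n"
  shows "nuE (symp n x y) = symp n (map nuE x) (map piE y)"
  unfolding symp_def nuE_add nuE_sum nuE_mult
  using assms by (intro arg_cong2[where f="(+)"] sum.cong) auto

lemma symp_zero_iff:
  assumes "length x = 2*n" "length y = 2*n"
  shows "(symp n x y = 0) = (symp n (map piE x) (map piE y) = 0 \<and> symp n (map nuE x) (map piE y) = 0)"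
  using EE_zero_iff[of "symp n x y"] symp_pi[OF assms] symp_nu[OF assms] by simp

definition mk :: "bit list \<Rightarrow> bit list \<Rightarrow> EE list" where
  "mk u v = map2 mkE u v"

lemma piE_mkE[simp]: "piE (mkE a b) = a"
  using bit_cases2[of a] bit_cases2[of b] by (auto simp: mkE_def)
lemma nuE_mkE[simp]: "nuE (mkE a b) = b"
  using bit_cases2[of a] bit_cases2[of b] by (auto simp: mkE_def)

lemma mk_props:
  assumes "length u = length v"
  shows "map piE (mk u v) = u" "map nuE (mk u v) = v" "length (mk u v) = length u"
  using assms unfolding mk_def by (auto intro!: nth_equalityI)

definition PP :: "nat \<Rightarrow> bit list set \<Rightarrow> bit list set \<Rightarrow> EE list set" where
  "PP n A B = {x \<in> vecs n. map piE x \<in> A \<and> map nuE x \<in> B}"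

lemma PP_int: "PP n A B \<inter> PP n A' B' = PP n (A \<inter> A') (B \<inter> B')"
  unfolding PP_def by auto

lemma PP_pi:
  assumes "A \<subseteq> vecs n" "B \<subseteq> vecs n" "B \<noteq> {}"
  shows "(\<forall>w\<in>PP n A B. Q (map piE w)) = (\<forall>u\<in>A. Q u)"
proof
  assume h: "\<forall>w\<in>PP n A B. Q (map piE w)"
  show "\<forall>u\<in>A. Q u"
  proof
    fix u assume u: "u \<in> A"
    obtain v where v: "v \<in> B" using assms by blast
    have lu: "length u = 2*n" using u assms(1) unfolding vecs_def by blast
    have lv: "length v = 2*n" using v assms(2) unfolding vecs_def by blast
    have l: "length u = length v" using lu lv by simp
    have "mk u v \<in> PP n A B" using mk_props[OF l] u v assms unfolding PP_def vecs_def by auto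
    then show "Q u" using h mk_props[OF l] by metis
  qed
qed (auto simp: PP_def)

lemma PP_nu:
  assumes "A \<subseteq> vecs n" "B \<subseteq> vecs n" "A \<noteq> {}"
  shows "(\<forall>w\<in>PP n A B. Q (map nuE w)) = (\<forall>v\<in>B. Q v)"
proof
  assume h: "\<forall>w\<in>PP n A B. Q (map nuE w)"
  show "\<forall>v\<in>B. Q v"
  proof
    fix v assume v: "v \<in> B"
    obtain u where u: "u \<in> A" using assms by blast
    have lu: "length u = 2*n" using u assms(1) unfolding vecs_def by blast
    have lv: "length v = 2*n" using v assms(2) unfolding vecs_def by blast
    have l: "length u = length v" using lu lv by simp
    have "mk u v \<in> PP n A B" using mk_props[OF l] u v assms unfolding PP_def vecs_def by auto
    then show "Q v" using h mk_props[OF l] by metis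
  qed
qed (auto simp: PP_def)

lemma PP_vecs: "PP n A B \<subseteq> vecs n" unfolding PP_def by auto

lemma perpSL_PP:
  assumes "A \<subseteq> vecs n" "B \<subseteq> vecs n" "B \<noteq> {}"
  shows "perpSL n (PP n A B) = PP n (bin_perpS n A) (bin_perpS n A)"
proof (rule set_eqI)
  fix z
  have "(z \<in> perpSL n (PP n A B)) =
        (z \<in> vecs n \<and> (\<forall>w\<in>PP n A B. symp n (map piE z) (map piE w) = 0 \<and> symp n (map nuE z) (map piE w) = 0))"
    unfolding perpSL_def using symp_zero_iff PP_vecs unfolding vecs_def by blast
  also have "\<dots> = (z \<in> vecs n \<and> (\<forall>u\<in>A. symp n (map piE z) u = 0 \<and> symp n (map nuE z) u = 0))"
    using PP_pi[OF assms, of "\<lambda>u. symp n (map piE z) u = 0 \<and> symp n (map nuE z) u = 0"] by simp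
  also have "\<dots> = (z \<in> PP n (bin_perpS n A) (bin_perpS n A))"
    unfolding PP_def bin_perpS_def vecs_def by auto
  finally show "(z \<in> perpSL n (PP n A B)) = (z \<in> PP n (bin_perpS n A) (bin_perpS n A))" .
qed

lemma perpSR_PP:
  assumes "A \<subseteq> vecs n" "B \<subseteq> vecs n" "A \<noteq> {}" "B \<noteq> {}"
  shows "perpSR n (PP n A B) = PP n (bin_perpS n A \<inter> bin_perpS n B) (vecs n)"
proof (rule set_eqI)
  fix z
  have "(z \<in> perpSR n (PP n A B)) =
        (z \<in> vecs n \<and> (\<forall>w\<in>PP n A B. symp n (map piE w) (map piE z) = 0) \<and> (\<forall>w\<in>PP n A B. symp n (map nuE w) (map piE z) = 0))"
    unfolding perpSR_def using symp_zero_iff PP_vecs unfolding vecs_def by blast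
  also have "\<dots> = (z \<in> vecs n \<and> (\<forall>u\<in>A. symp n u (map piE z) = 0) \<and> (\<forall>v\<in>B. symp n v (map piE z) = 0))"
    using PP_pi[OF assms(1,2,4), of "\<lambda>u. symp n u (map piE z) = 0"]
          PP_nu[OF assms(1,2,3), of "\<lambda>u. symp n u (map piE z) = 0"] by simp
  also have "\<dots> = (z \<in> PP n (bin_perpS n A \<inter> bin_perpS n B) (vecs n))"
    unfolding PP_def bin_perpS_def vecs_def by (auto simp: symp_comm_bit)
  finally show "(z \<in> perpSR n (PP n A B)) = (z \<in> PP n (bin_perpS n A \<inter> bin_perpS n B) (vecs n))" .
qed


lemma map2_map_same: "map2 f xs (map g xs) = map (\<lambda>x. f x (g x)) xs"
  by (induction xs) simp_all

lemma elem1: "c + Kap * c = zeta_mult (nuE c)"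
  by (cases c) (simp_all add: zeta_mult_def zero_EE_def)
lemma elem2: "piE a = piE b \<Longrightarrow> Kap * a + zeta_mult (nuE b) = b"
  by (cases a; cases b) (simp_all add: zeta_mult_def zero_EE_def)
lemma elem3: "Zet * c = zeta_mult (piE c)"
  by (cases c) (simp_all add: zeta_mult_def zero_EE_def)
lemma zeta_add: "zeta_mult (a + b) = zeta_mult a + zeta_mult b"
  using bit_cases2[of a] bit_cases2[of b] by (auto simp: zeta_mult_def zero_EE_def)
lemma zeta_0: "zeta_mult 0 = 0" by (simp add: zeta_mult_def zero_EE_def)

lemma map_piE_add: "length x = length y \<Longrightarrow> map piE (map2 (+) x y) = map2 (+) (map piE x) (map piE y)"
  by (rule nth_equalityI) (simp_all add: piE_add)
lemma map_zeta_add: "length x = length y \<Longrightarrow> map zeta_mult (map2 (+) x y) = map2 (+) (map zeta_mult x) (map zeta_mult y)"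
  by (rule nth_equalityI) (simp_all add: zeta_add)

lemma C_facts:
  assumes "E_linear n C"
  shows "C = PP n (C_Res C) (C_Tor n C)" "bsub n (C_Res C)" "bsub n (C_Tor n C)" "C_Res C \<subseteq> C_Tor n C"
proof -
  have Cs: "C \<subseteq> vecs n" and C0: "replicate (2*n) 0 \<in> C"
    and add: "\<And>x y. x \<in> C \<Longrightarrow> y \<in> C \<Longrightarrow> map2 (+) x y \<in> C"
    and sc: "\<And>e x. x \<in> C \<Longrightarrow> map (\<lambda>c. e * c) x \<in> C"
    using assms unfolding E_linear_def by blast+
  have lenC: "\<And>x. x \<in> C \<Longrightarrow> length x = 2*n" using Cs unfolding vecs_def by blast
  show "C = PP n (C_Res C) (C_Tor n C)"
  proof
    show "C \<subseteq> PP n (C_Res C) (C_Tor n C)"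
    proof
      fix x assume x: "x \<in> C"
      have "map2 (+) x (map (\<lambda>c. Kap * c) x) \<in> C" using add sc x by blast
      moreover have "map2 (+) x (map (\<lambda>c. Kap * c) x) = map zeta_mult (map nuE x)"
        by (simp add: map2_map_same elem1)
      ultimately have "map nuE x \<in> C_Tor n C" using lenC[OF x] unfolding C_Tor_def vecs_def by simp
      moreover have "map piE x \<in> C_Res C" using x unfolding C_Res_def by blast
      ultimately show "x \<in> PP n (C_Res C) (C_Tor n C)" using lenC[OF x] unfolding PP_def vecs_def by simp
    qed
    show "PP n (C_Res C) (C_Tor n C) \<subseteq> C"
    proof
      fix x assume x: "x \<in> PP n (C_Res C) (C_Tor n C)"
      then obtain y where y: "y \<in> C" "map piE x = map piE y" unfolding PP_def C_Res_def by auto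
      have z: "map zeta_mult (map nuE x) \<in> C" using x unfolding PP_def C_Tor_def by auto
      have lx: "length x = 2*n" using x unfolding PP_def vecs_def by auto
      have ly: "length y = 2*n" using lenC y(1) by blast
      have "map2 (+) (map (\<lambda>c. Kap * c) y) (map zeta_mult (map nuE x)) \<in> C" using add sc y z by blast
      moreover have "map2 (+) (map (\<lambda>c. Kap * c) y) (map zeta_mult (map nuE x)) = x"
      proof (rule nth_equalityI)
        show "length (map2 (+) (map (\<lambda>c. Kap * c) y) (map zeta_mult (map nuE x))) = length x"
          using lx ly by simp
        fix i assume "i < length (map2 (+) (map (\<lambda>c. Kap * c) y) (map zeta_mult (map nuE x)))"
        then have i: "i < length x" "i < length y" using lx ly by auto
        have "piE (y ! i) = piE (x ! i)" using y(2) i by (metis nth_map)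
        then show "map2 (+) (map (\<lambda>c. Kap * c) y) (map zeta_mult (map nuE x)) ! i = x ! i"
          using i elem2 by simp
      qed
      ultimately show "x \<in> C" by simp
    qed
  qed
  show "bsub n (C_Res C)"
    unfolding bsub_def
  proof (intro conjI ballI)
    show "C_Res C \<subseteq> vecs n" using lenC unfolding C_Res_def vecs_def by auto
    have "map piE (replicate (2*n) 0) = replicate (2*n) 0" by simp
    then show "replicate (2*n) 0 \<in> C_Res C" using C0 unfolding C_Res_def by (metis image_eqI)
    fix u v assume "u \<in> C_Res C" "v \<in> C_Res C"
    then obtain x y where "x \<in> C" "y \<in> C" "u = map piE x" "v = map piE y" unfolding C_Res_def by auto
    then show "map2 (+) u v \<in> C_Res C"
      using add map_piE_add[of x y] lenC unfolding C_Res_def by (metis image_eqI)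
  qed
  show "bsub n (C_Tor n C)"
    unfolding bsub_def
  proof (intro conjI ballI)
    show "C_Tor n C \<subseteq> vecs n" unfolding C_Tor_def by auto
    have "map zeta_mult (replicate (2*n) 0) = replicate (2*n) 0" by (simp add: zeta_0)
    then show "replicate (2*n) 0 \<in> C_Tor n C" using C0 unfolding C_Tor_def vecs_def by (simp only: mem_Collect_eq length_replicate)
    fix u v assume "u \<in> C_Tor n C" "v \<in> C_Tor n C"
    then show "map2 (+) u v \<in> C_Tor n C"
      using add map_zeta_add[of u v] unfolding C_Tor_def vecs_def by auto
  qed
  show "C_Res C \<subseteq> C_Tor n C"
  proof
    fix u assume "u \<in> C_Res C"
    then obtain x where x: "x \<in> C" "u = map piE x" unfolding C_Res_def by auto
    have e: "map (\<lambda>c. Zet * c) x = map zeta_mult u" unfolding x(2) by (simp add: elem3)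
    have "map zeta_mult u \<in> C" using sc[OF x(1), of Zet] unfolding e .
    moreover have "length u = 2*n" using lenC[OF x(1)] x(2) by simp
    ultimately show "u \<in> C_Tor n C" unfolding C_Tor_def vecs_def by simp
  qed
qed


lemma bsub_nonempty: "bsub n A \<Longrightarrow> A \<noteq> {}" unfolding bsub_def by auto
lemma bsub_vecs: "bsub n A \<Longrightarrow> A \<subseteq> vecs n" unfolding bsub_def by auto
lemma perp_ne: "bin_perpS n A \<noteq> {}" using perp_0 by blast

lemma bsub_Z: "bsub n {replicate (2*n) 0}"
  unfolding bsub_def vecs_def by (auto intro!: nth_equalityI)

lemma perp_Z: "bin_perpS n {replicate (2*n) 0} = vecs n"
  unfolding bin_perpS_def using symp_zero_left symp_comm_bit by auto

theorem mainTheorem14: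
  fixes n :: nat and C :: "EE list set"
  assumes "E_linear n C"
  shows "(free_code n C \<longrightarrow> LSHull n (perpSL n C) = LSHull n C)
    \<and> ((C_Res C \<inter> bin_perpS n (C_Tor n C) = {replicate (2 * n) 0} \<and> C_Tor n C = vecs n)
         \<longrightarrow> RSHull n (perpSR n C) = RSHull n C)
    \<and> SHull n (perpS n C) = SHull n C"
proof -
  define R where "R = C_Res C"
  define T where "T = C_Tor n C"
  note F = C_facts[OF assms, folded R_def T_def]
  have C: "C = PP n R T" using F(1) .
  have bR: "bsub n R" and bT: "bsub n T" and RT: "R \<subseteq> T" using F by auto
  have Rv: "R \<subseteq> vecs n" and Tv: "T \<subseteq> vecs n" using bR bT bsub_vecs by auto
  have Rn: "R \<noteq> {}" and Tn: "T \<noteq> {}" using bR bT bsub_nonempty by auto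
  have pv: "\<And>A. bin_perpS n A \<subseteq> vecs n" by (rule perp_vecs)
  have pn: "\<And>A. bin_perpS n A \<noteq> {}" by (rule perp_ne)
  have p1: "free_code n C \<longrightarrow> LSHull n (perpSL n C) = LSHull n C"
  proof
    assume "free_code n C"
    then have RT': "R = T" unfolding free_code_def R_def T_def .
    have D: "perpSL n C = PP n (bin_perpS n R) (bin_perpS n R)"
      unfolding C RT'[symmetric] using perpSL_PP[OF Rv Rv Rn] .
    have DD: "perpSL n (perpSL n C) = PP n R R"
      unfolding D using perpSL_PP[OF pv pv pn] perp_perp[OF bR] by simp
    show "LSHull n (perpSL n C) = LSHull n C"
      unfolding LSHull_def DD unfolding D by (simp add: C RT'[symmetric] PP_int Int_commute)
  qed
  have p2: "(C_Res C \<inter> bin_perpS n (C_Tor n C) = {replicate (2 * n) 0} \<and> C_Tor n C = vecs n)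
         \<longrightarrow> RSHull n (perpSR n C) = RSHull n C"
  proof
    assume h: "C_Res C \<inter> bin_perpS n (C_Tor n C) = {replicate (2 * n) 0} \<and> C_Tor n C = vecs n"
    then have Tall: "T = vecs n" unfolding T_def by simp
    define Z where "Z = {replicate (2*n) (0::bit)}"
    have pZ: "bin_perpS n Z = vecs n" unfolding Z_def by (rule perp_Z)
    have pV: "bin_perpS n (vecs n) = Z" using perp_perp[OF bsub_Z[of n]] perp_Z[of n] unfolding Z_def by simp
    have Zv: "Z \<subseteq> vecs n" and Zn: "Z \<noteq> {}" unfolding Z_def vecs_def by auto
    have ZR: "Z \<subseteq> bin_perpS n R" unfolding Z_def using perp_0 by blast
    have R0: "replicate (2*n) 0 \<in> R" using bR unfolding bsub_def by blast
    have D: "perpSR n C = PP n Z (vecs n)"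
      unfolding C Tall using perpSR_PP[OF Rv _ Rn, of "vecs n"] Tn Tall pV ZR by (auto simp: Int_absorb1)
    have DD: "perpSR n (perpSR n C) = PP n Z (vecs n)"
    proof -
      have Vn: "vecs n \<noteq> ({} :: bit list set)" using Tn Tall by simp
      have "perpSR n (PP n Z (vecs n)) = PP n (bin_perpS n Z \<inter> bin_perpS n (vecs n)) (vecs n)"
        by (rule perpSR_PP[OF Zv subset_refl Zn Vn])
      also have "\<dots> = PP n Z (vecs n)" unfolding pZ pV using Zv by (simp add: Int_absorb1)
      finally show ?thesis unfolding D .
    qed
    have RZ: "R \<inter> Z = Z" using R0 unfolding Z_def by auto
    show "RSHull n (perpSR n C) = RSHull n C"
      unfolding RSHull_def DD unfolding D unfolding C Tall by (simp add: PP_int RZ)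
  qed
  have p3: "SHull n (perpS n C) = SHull n C"
  proof -
    have TR: "bin_perpS n T \<subseteq> bin_perpS n R" using perp_anti[OF RT] .
    have D: "perpS n C = PP n (bin_perpS n T) (bin_perpS n R)"
      unfolding perpS_def C perpSL_PP[OF Rv Tv Tn] perpSR_PP[OF Rv Tv Rn Tn] PP_int
      using TR pv[of R] by (simp add: Int_absorb1 Int_absorb2)
    have DD: "perpS n (perpS n C) = PP n R T"
      unfolding perpS_def[of n "perpS n C"] unfolding D perpSL_PP[OF pv pv pn] perpSR_PP[OF pv pv pn pn] PP_int
        perp_perp[OF bR] perp_perp[OF bT]
      using RT Tv by (simp add: Int_absorb1 Int_absorb2)
    show ?thesis
      unfolding SHull_def DD unfolding D unfolding C perpS_def[of n "PP n R T"] perpSL_PP[OF Rv Tv Tn] perpSR_PP[OF Rv Tv Rn Tn] PP_int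
      using TR pv[of R] by (simp add: Int_absorb1 Int_absorb2 Int_ac)
  qed
  show ?thesis using p1 p2 p3 by blast
qed

end
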